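(* For integers $4<m\le n$, the algebra $\mathtt{A}_n^{\{3,m\}}$ is wild.
   Context: $\Bbbk$ is an algebraically closed field; arrows compose right to left. $\mathtt{A}_n$ is the algebra of the quiver with vertices $1,\dots,n$, arrows $a_i:i\to i+1$, $b_i:i+1\to i$ ($1\le i\le n-1$), relations $a_ib_i=b_{i+1}a_{i+1}$ ($1\le i\le n-2$), $a_{n-1}b_{n-1}=0$. For $X\subset\{2,\dots,n\}$, $e_X$ is the sum of primitive idempotents for vertices in $\{1\}\cup X$ and $\mathtt{A}_n^X=e_X\mathtt{A}_ne_X$. *)

theory Defs
  imports "HOL-Computational_Algebra.Polynomial" "Jordan_Normal_Form.Matrix"
begin

definition alg_closed :: "'k::field itself \<Rightarrow> bool" where
  "alg_closed _ \<longleftrightarrow> (\<forall>p :: 'k poly. degree p \<ge> 1 \<longrightarrow> (\<exists>x. poly p x = 0))"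

text \<open>Arrows: (i, True) is a_i : i -> i+1, (i, False) is b_i : i+1 -> i.
  A path is a start vertex together with the list of arrows in order of traversal;
  (v, []) is the trivial path (primitive idempotent) at v.\<close>

type_synonym arrow = "nat \<times> bool"
type_synonym path = "nat \<times> arrow list"

fun arr_src :: "arrow \<Rightarrow> nat" where
  "arr_src (i, a) = (if a then i else Suc i)"

fun arr_tgt :: "arrow \<Rightarrow> nat" where
  "arr_tgt (i, a) = (if a then Suc i else i)"

fun walk_ok :: "nat \<Rightarrow> nat \<Rightarrow> arrow list \<Rightarrow> bool" where
  "walk_ok n v [] = (1 \<le> v \<and> v \<le> n)"
| "walk_ok n v (x # ws) =
     (1 \<le> fst x \<and> fst x < n \<and> arr_src x = v \<and> walk_ok n (arr_tgt x) ws)"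

fun walk_end :: "nat \<Rightarrow> arrow list \<Rightarrow> nat" where
  "walk_end v [] = v"
| "walk_end v (x # ws) = walk_end (arr_tgt x) ws"

definition valid_path :: "nat \<Rightarrow> path \<Rightarrow> bool" where
  "valid_path n p \<longleftrightarrow> walk_ok n (fst p) (snd p)"

definition path_alg :: "nat \<Rightarrow> (path \<Rightarrow> 'k::field) set" where
  "path_alg n = {f. finite {p. f p \<noteq> 0} \<and> (\<forall>p. f p \<noteq> 0 \<longrightarrow> valid_path n p)}"

text \<open>Multiplication; arrows compose right to left, so in pa_mult f g the path of g
  is traversed first.\<close>

definition pa_mult :: "(path \<Rightarrow> 'k::field) \<Rightarrow> (path \<Rightarrow> 'k) \<Rightarrow> path \<Rightarrow> 'k" where
  "pa_mult f g p = (\<Sum>i\<in>{0..length (snd p)}.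
      f (walk_end (fst p) (take i (snd p)), drop i (snd p)) * g (fst p, take i (snd p)))"

definition pa_add :: "(path \<Rightarrow> 'k::field) \<Rightarrow> (path \<Rightarrow> 'k) \<Rightarrow> path \<Rightarrow> 'k" where
  "pa_add f g = (\<lambda>p. f p + g p)"

definition pa_smult :: "'k::field \<Rightarrow> (path \<Rightarrow> 'k) \<Rightarrow> path \<Rightarrow> 'k" where
  "pa_smult c f = (\<lambda>p. c * f p)"

definition pa_path :: "path \<Rightarrow> path \<Rightarrow> 'k::field" where
  "pa_path q = (\<lambda>p. if p = q then 1 else 0)"

text \<open>Relations: a_i b_i - b_(i+1) a_(i+1) for 1 <= i <= n-2, and a_(n-1) b_(n-1).\<close>

definition relations :: "nat \<Rightarrow> (path \<Rightarrow> 'k::field) set" where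
  "relations n =
     {pa_add (pa_path (Suc i, [(i, False), (i, True)]))
             (pa_smult (-1) (pa_path (Suc i, [(Suc i, True), (Suc i, False)])))
       | i. 1 \<le> i \<and> i \<le> n - 2}
   \<union> {pa_path (n, [(n - 1, False), (n - 1, True)])}"

inductive_set rel_ideal :: "nat \<Rightarrow> (path \<Rightarrow> 'k::field) set" for n where
  gen: "r \<in> relations n \<Longrightarrow> r \<in> rel_ideal n"
| add: "f \<in> rel_ideal n \<Longrightarrow> g \<in> rel_ideal n \<Longrightarrow> pa_add f g \<in> rel_ideal n"
| smult: "f \<in> rel_ideal n \<Longrightarrow> pa_smult c f \<in> rel_ideal n"
| lmult: "f \<in> rel_ideal n \<Longrightarrow> valid_path n q \<Longrightarrow> pa_mult (pa_path q) f \<in> rel_ideal n"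
| rmult: "f \<in> rel_ideal n \<Longrightarrow> valid_path n q \<Longrightarrow> pa_mult f (pa_path q) \<in> rel_ideal n"

definition idem_X :: "nat set \<Rightarrow> path \<Rightarrow> 'k::field" where
  "idem_X X = (\<lambda>p. if p \<in> {(v, []) | v. v \<in> {1} \<union> X} then 1 else 0)"

text \<open>The algebra A_n^X = e_X A_n e_X is the quotient of
  this corner by its intersection with rel_ideal n; accordingly, algebra homomorphisms
  out of A_n^X are described as homomorphisms out of the corner that vanish on
  corner \<inter> rel_ideal n.\<close>

definition corner :: "nat \<Rightarrow> nat set \<Rightarrow> (path \<Rightarrow> 'k::field) set" where
  "corner n X = (\<lambda>f. pa_mult (idem_X X) (pa_mult f (idem_X X))) ` path_alg n"

text \<open>A noncommutative polynomial: coefficient function on words over {x,y}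
  (True = x, False = y), with finite support.\<close>

type_synonym 'k ncpoly = "bool list \<Rightarrow> 'k"

definition nc_poly :: "'k::field ncpoly \<Rightarrow> bool" where
  "nc_poly p \<longleftrightarrow> finite {w. p w \<noteq> 0}"

definition nc_mult :: "'k::field ncpoly \<Rightarrow> 'k ncpoly \<Rightarrow> 'k ncpoly" where
  "nc_mult p q = (\<lambda>w. \<Sum>i\<in>{0..length w}. p (take i w) * q (drop i w))"

definition nc_one :: "'k::field ncpoly" where
  "nc_one = (\<lambda>w. if w = [] then 1 else 0)"

fun word_mat :: "nat \<Rightarrow> 'k::field mat \<Rightarrow> 'k mat \<Rightarrow> bool list \<Rightarrow> 'k mat" where
  "word_mat r X Y [] = 1\<^sub>m r"
| "word_mat r X Y (b # w) = (if b then X else Y) * word_mat r X Y w"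

definition nc_eval :: "nat \<Rightarrow> 'k::field ncpoly \<Rightarrow> 'k mat \<Rightarrow> 'k mat \<Rightarrow> 'k mat" where
  "nc_eval r p X Y = mat r r (\<lambda>(i, j). \<Sum>w\<in>{w. p w \<noteq> 0}. p w * word_mat r X Y w $$ (i, j))"

text \<open>Finite-dimensional k<x,y>-modules: pairs (X, Y) of r x r matrices.\<close>

definition kxy_iso :: "nat \<Rightarrow> 'k::field mat \<Rightarrow> 'k mat \<Rightarrow> nat \<Rightarrow> 'k mat \<Rightarrow> 'k mat \<Rightarrow> bool" where
  "kxy_iso r X Y r' X' Y' \<longleftrightarrow> r = r' \<and>
     (\<exists>S \<in> carrier_mat r r. invertible_mat S \<and> S * X = X' * S \<and> S * Y = Y' * S)"

definition kxy_indec :: "nat \<Rightarrow> 'k::field mat \<Rightarrow> 'k mat \<Rightarrow> bool" where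
  "kxy_indec r X Y \<longleftrightarrow> r > 0 \<and>
     (\<forall>E \<in> carrier_mat r r. E * X = X * E \<and> E * Y = Y * E \<and> E * E = E
        \<longrightarrow> E = 0\<^sub>m r r \<or> E = 1\<^sub>m r)"

text \<open>A module of dimension D is given by the representing matrices rho f, f in the corner.\<close>

definition rep_iso :: "nat \<Rightarrow> nat set \<Rightarrow> nat \<Rightarrow> ((path \<Rightarrow> 'k::field) \<Rightarrow> 'k mat)
    \<Rightarrow> nat \<Rightarrow> ((path \<Rightarrow> 'k) \<Rightarrow> 'k mat) \<Rightarrow> bool" where
  "rep_iso n X D \<rho> D' \<rho>' \<longleftrightarrow> D = D' \<and>
     (\<exists>S \<in> carrier_mat D D. invertible_mat S \<and> (\<forall>f \<in> corner n X. S * \<rho> f = \<rho>' f * S))"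

definition rep_indec :: "nat \<Rightarrow> nat set \<Rightarrow> nat \<Rightarrow> ((path \<Rightarrow> 'k::field) \<Rightarrow> 'k mat) \<Rightarrow> bool" where
  "rep_indec n X D \<rho> \<longleftrightarrow> D > 0 \<and>
     (\<forall>E \<in> carrier_mat D D. (\<forall>f \<in> corner n X. E * \<rho> f = \<rho> f * E) \<and> E * E = E
        \<longrightarrow> E = 0\<^sub>m D D \<or> E = 1\<^sub>m D)"

text \<open>An A_n^X-k<x,y>-bimodule which is free of rank d as a right k<x,y>-module is the same
  as a unital algebra homomorphism Phi : A_n^X -> M_d(k<x,y>).\<close>

definition is_bimod :: "nat \<Rightarrow> nat set \<Rightarrow> nat
    \<Rightarrow> ((path \<Rightarrow> 'k::field) \<Rightarrow> nat \<Rightarrow> nat \<Rightarrow> 'k ncpoly) \<Rightarrow> bool" where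
  "is_bimod n X d \<Phi> \<longleftrightarrow>
     (\<forall>f \<in> corner n X. \<forall>i<d. \<forall>j<d. nc_poly (\<Phi> f i j)) \<and>
     (\<forall>f \<in> corner n X. \<forall>g \<in> corner n X. \<forall>i<d. \<forall>j<d.
         \<Phi> (pa_add f g) i j = (\<lambda>w. \<Phi> f i j w + \<Phi> g i j w)) \<and>
     (\<forall>c. \<forall>f \<in> corner n X. \<forall>i<d. \<forall>j<d.
         \<Phi> (pa_smult c f) i j = (\<lambda>w. c * \<Phi> f i j w)) \<and>
     (\<forall>f \<in> corner n X. \<forall>g \<in> corner n X. \<forall>i<d. \<forall>j<d.
         \<Phi> (pa_mult f g) i j = (\<lambda>w. \<Sum>l<d. nc_mult (\<Phi> f i l) (\<Phi> g l j) w)) \<and>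
     (\<forall>i<d. \<forall>j<d. \<Phi> (idem_X X) i j = (if i = j then nc_one else (\<lambda>w. 0))) \<and>
     (\<forall>f \<in> corner n X \<inter> rel_ideal n. \<forall>i<d. \<forall>j<d. \<Phi> f i j = (\<lambda>w. 0))"

text \<open>The module M \<otimes>_{k<x,y>} V for V = (k^r, X, Y): dimension d*r, with f acting by the
  block matrix (Phi f i j evaluated at (X, Y)).\<close>

definition tensor_rep :: "nat \<Rightarrow> ((path \<Rightarrow> 'k::field) \<Rightarrow> nat \<Rightarrow> nat \<Rightarrow> 'k ncpoly)
    \<Rightarrow> nat \<Rightarrow> 'k mat \<Rightarrow> 'k mat \<Rightarrow> (path \<Rightarrow> 'k) \<Rightarrow> 'k mat" where
  "tensor_rep d \<Phi> r X Y f = mat (d * r) (d * r)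
     (\<lambda>(i, j). nc_eval r (\<Phi> f (i div r) (j div r)) X Y $$ (i mod r, j mod r))"

text \<open>Wildness (Drozd): there is an A-k<x,y>-bimodule M, finitely generated free as a right
  k<x,y>-module, such that M \<otimes> - : mod k<x,y> -> mod A preserves indecomposability and
  reflects isomorphism (on finite-dimensional modules).\<close>

definition wild_corner :: "'k::field itself \<Rightarrow> nat \<Rightarrow> nat set \<Rightarrow> bool" where
  "wild_corner _ n X \<longleftrightarrow>
     (\<exists>d (\<Phi> :: (path \<Rightarrow> 'k) \<Rightarrow> nat \<Rightarrow> nat \<Rightarrow> 'k ncpoly). is_bimod n X d \<Phi> \<and>
        (\<forall>r X1 Y1. X1 \<in> carrier_mat r r \<longrightarrow> Y1 \<in> carrier_mat r r \<longrightarrow> kxy_indec r X1 Y1 \<longrightarrow>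
            rep_indec n X (d * r) (tensor_rep d \<Phi> r X1 Y1)) \<and>
        (\<forall>r X1 Y1 r' X2 Y2. X1 \<in> carrier_mat r r \<longrightarrow> Y1 \<in> carrier_mat r r \<longrightarrow>
            X2 \<in> carrier_mat r' r' \<longrightarrow> Y2 \<in> carrier_mat r' r' \<longrightarrow>
            rep_iso n X (d * r) (tensor_rep d \<Phi> r X1 Y1) (d * r') (tensor_rep d \<Phi> r' X2 Y2) \<longrightarrow>
            kxy_iso r X1 Y1 r' X2 Y2))"

end

theory Submission
  imports Defs
begin



fun bpath :: "nat \<Rightarrow> nat \<Rightarrow> arrow list" where
  "bpath v 0 = []"
| "bpath v (Suc k) = (v - 1, False) # bpath (v - 1) k"

definition "pC = ((1::nat), [((1::nat),True),(1,False)])"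
definition "pU = ((1::nat), [((1::nat),True),(2,True)])"
definition "pV = ((3::nat), [((2::nat),False),(1,False)])"
definition "pD1 = ((3::nat), [((2::nat),False),(2,True)])"
definition "pD2 = ((3::nat), [((3::nat),True),(3,False)])"
definition "pT m = (m, bpath m (m - 3))"

fun bad :: "arrow \<Rightarrow> arrow \<Rightarrow> bool" where
  "bad x y = (fst x = fst y \<and> ((\<not> snd x \<and> snd y) \<or> (snd x \<and> \<not> snd y \<and> 2 \<le> fst x)))"

fun nobad :: "arrow list \<Rightarrow> bool" where
  "nobad (x # y # r) = (\<not> bad x y \<and> nobad (y # r))"
| "nobad _ = True"

lemma nobad_iff: "nobad l \<longleftrightarrow> (\<forall>j. Suc j < length l \<longrightarrow> \<not> bad (l ! j) (l ! Suc j))"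
proof (induction l rule: nobad.induct)
  case (1 x y r)
  show ?case
  proof
    assume h: "nobad (x # y # r)"
    show "\<forall>j. Suc j < length (x # y # r) \<longrightarrow> \<not> bad ((x # y # r) ! j) ((x # y # r) ! Suc j)"
    proof (intro allI impI)
      fix j assume j: "Suc j < length (x # y # r)"
      show "\<not> bad ((x # y # r) ! j) ((x # y # r) ! Suc j)"
      proof (cases j)
        case 0 then show ?thesis using h by simp
      next
        case (Suc j')
        then show ?thesis using h 1 j by auto
      qed
    qed
  next
    assume h: "\<forall>j. Suc j < length (x # y # r) \<longrightarrow> \<not> bad ((x # y # r) ! j) ((x # y # r) ! Suc j)"
    have a: "\<not> bad x y" using h[rule_format, of 0] by simp
    have "\<forall>j. Suc j < length (y # r) \<longrightarrow> \<not> bad ((y # r) ! j) ((y # r) ! Suc j)"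
      using h[rule_format, of "Suc _"] by auto
    then show "nobad (x # y # r)" using a 1 by simp
  qed
next
  case "2_1" then show ?case by simp
next
  case ("2_2" v) then show ?case by simp
qed

lemma nobad_take: "nobad l \<Longrightarrow> nobad (take i l)"
  unfolding nobad_iff by auto

lemma nobad_drop: "nobad l \<Longrightarrow> nobad (drop i l)"
  unfolding nobad_iff by (auto simp: add.commute)

lemma bpath_snd: "x \<in> set (bpath v k) \<Longrightarrow> snd x = False"
  by (induction k arbitrary: v) auto

lemma bpath_nobad: "nobad (bpath v k)"
  unfolding nobad_iff
proof (intro allI impI)
  fix j assume "Suc j < length (bpath v k)"
  then have "bpath v k ! j \<in> set (bpath v k)" "bpath v k ! Suc j \<in> set (bpath v k)" by auto
  then show "\<not> bad (bpath v k ! j) (bpath v k ! Suc j)" using bpath_snd by auto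
qed

definition good :: "(path \<Rightarrow> 'k::field) \<Rightarrow> bool" where
  "good f \<longleftrightarrow> (\<forall>p. nobad (snd p) \<longrightarrow> f p = 0) \<and> f pD1 + f pD2 = 0"

lemma sum_0_2: "(\<Sum>i\<in>{0..(2::nat)}. F i) = F 0 + F 1 + F 2"
  by (simp add: numeral_2_eq_2 atLeast0_atMost_Suc add.commute add.left_commute)

lemma ideal_good:
  assumes "f \<in> rel_ideal n" "5 \<le> n"
  shows "good (f :: path \<Rightarrow> 'k::field)"
  using assms
proof (induction rule: rel_ideal.induct)
  case (gen r)
  then show ?case
    unfolding relations_def good_def
    by (auto simp: pa_add_def pa_smult_def pa_path_def pD1_def pD2_def)
next
  case (add f g)
  then show ?case unfolding good_def pa_add_def
    by (simp add: algebra_simps)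
next
  case (smult f c)
  then show ?case unfolding good_def pa_smult_def
    by (simp add: algebra_simps flip: distrib_left)
next
  case (lmult f q)
  have z: "\<And>p. nobad (snd p) \<Longrightarrow> f p = 0" using lmult unfolding good_def by auto
  have s: "f pD1 + f pD2 = 0" using lmult unfolding good_def by auto
  have A: "pa_mult (pa_path q) f p = 0" if "nobad (snd p)" for p
    unfolding pa_mult_def
    by (rule sum.neutral) (use z nobad_take that in auto)
  have B: "pa_mult (pa_path q) f pD1 = pa_path q (3, []) * f pD1"
    unfolding pa_mult_def pD1_def
    by (simp add: sum_0_2 z)
  have C: "pa_mult (pa_path q) f pD2 = pa_path q (3, []) * f pD2"
    unfolding pa_mult_def pD2_def
    by (simp add: sum_0_2 z)
  show ?case unfolding good_def
    using A B C s by (simp flip: distrib_left)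
next
  case (rmult f q)
  have z: "\<And>p. nobad (snd p) \<Longrightarrow> f p = 0" using rmult unfolding good_def by auto
  have s: "f pD1 + f pD2 = 0" using rmult unfolding good_def by auto
  have A: "pa_mult f (pa_path q) p = 0" if "nobad (snd p)" for p
    unfolding pa_mult_def
    by (rule sum.neutral) (use z nobad_drop that in auto)
  have B: "pa_mult f (pa_path q) pD1 = f pD1 * pa_path q (3, [])"
    unfolding pa_mult_def pD1_def
    by (simp add: sum_0_2 z)
  have C: "pa_mult f (pa_path q) pD2 = f pD2 * pa_path q (3, [])"
    unfolding pa_mult_def pD2_def
    by (simp add: sum_0_2 z)
  show ?case unfolding good_def
    using A B C s by (simp flip: distrib_right)
qed


lemma walk_end_bpath_take: "i \<le> k \<Longrightarrow> walk_end v (take i (bpath v k)) = v - i"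
proof (induction k arbitrary: v i)
  case 0 then show ?case by simp
next
  case (Suc k)
  then show ?case by (cases i) auto
qed

lemma length_bpath[simp]: "length (bpath v k) = k"
  by (induction k arbitrary: v) auto

lemma walk_end_bpath: "walk_end v (bpath v k) = v - k"
  using walk_end_bpath_take[of k k v] by simp

lemma walk_ok_bpath: "k < v \<Longrightarrow> v \<le> n \<Longrightarrow> walk_ok n v (bpath v k)"
  by (induction k arbitrary: v) auto

lemma pa_mult_idem_right:
  "pa_mult h (idem_X X) p = (if fst p \<in> insert 1 X then h p else 0)"
proof -
  obtain v l where p: "p = (v, l)" by fastforce
  have "pa_mult h (idem_X X) (v, l) =
      (\<Sum>i\<in>{0..length l}. if i = 0 then h (v, l) * (if v \<in> insert 1 X then 1 else 0) else 0)"
    unfolding pa_mult_def fst_conv snd_conv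
  proof (rule sum.cong[OF refl])
    fix i assume i: "i \<in> {0..length l}"
    show "h (walk_end v (take i l), drop i l) *
          idem_X X (v, take i l) =
          (if i = 0 then h (v, l) * (if v \<in> insert 1 X then 1 else 0) else 0)"
    proof (cases "i = 0")
      case True then show ?thesis by (simp add: idem_X_def)
    next
      case False
      then have "take i l \<noteq> []" using i by auto
      then show ?thesis using False by (simp add: idem_X_def)
    qed
  qed
  also have "\<dots> = h (v, l) * (if v \<in> insert 1 X then 1 else 0)"
    by (simp add: sum.delta)
  finally show ?thesis using p by simp
qed

lemma pa_mult_idem_left:
  "pa_mult (idem_X X) k p = (if walk_end (fst p) (snd p) \<in> insert 1 X then k p else 0)"
proof -
  obtain v l where p: "p = (v, l)" by fastforce
  have "pa_mult (idem_X X) k (v, l) =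
      (\<Sum>i\<in>{0..length l}. if i = length l then (if walk_end v l \<in> insert 1 X then 1 else 0) * k (v, l) else 0)"
    unfolding pa_mult_def fst_conv snd_conv
  proof (rule sum.cong[OF refl])
    fix i assume i: "i \<in> {0..length l}"
    show "idem_X X (walk_end v (take i l), drop i l) *
          k (v, take i l) =
          (if i = length l then (if walk_end v l \<in> insert 1 X then 1 else 0) * k (v, l) else 0)"
    proof (cases "i = length l")
      case True then show ?thesis by (simp add: idem_X_def)
    next
      case False
      then have "drop i l \<noteq> []" using i by auto
      then show ?thesis using False by (simp add: idem_X_def)
    qed
  qed
  also have "\<dots> = (if walk_end v l \<in> insert 1 X then 1 else 0) * k (v, l)"
    by (simp add: sum.delta)
  finally show ?thesis using p by simp
qed

lemma corner_zero:
  assumes "f \<in> corner n X" "fst p \<notin> insert 1 X \<or> walk_end (fst p) (snd p) \<notin> insert 1 X"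
  shows "f p = 0"
proof -
  obtain h where "f = (\<lambda>f. pa_mult (idem_X X) (pa_mult f (idem_X X))) h"
    using assms(1) unfolding corner_def by auto
  then show ?thesis using assms(2)
    by (auto simp: pa_mult_idem_left pa_mult_idem_right)
qed

lemma corner_path:
  assumes "valid_path n q" "fst q \<in> insert 1 X" "walk_end (fst q) (snd q) \<in> insert 1 X"
  shows "(pa_path q :: path \<Rightarrow> 'k::field) \<in> corner n X"
proof -
  have "{p. (pa_path q :: path \<Rightarrow> 'k) p \<noteq> 0} = {q}" by (auto simp: pa_path_def)
  then have "(pa_path q :: path \<Rightarrow> 'k) \<in> path_alg n"
    using assms(1) unfolding path_alg_def by (auto simp: pa_path_def)
  moreover have "pa_mult (idem_X X) (pa_mult (pa_path q) (idem_X X)) = (pa_path q :: path \<Rightarrow> 'k)"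
  proof (rule ext)
    fix p show "pa_mult (idem_X X) (pa_mult (pa_path q) (idem_X X)) p = (pa_path q :: path \<Rightarrow> 'k) p"
      using assms(2,3) by (cases "p = q") (auto simp: pa_mult_idem_left pa_mult_idem_right pa_path_def)
  qed
  ultimately show ?thesis unfolding corner_def by force
qed

lemma sum_ends:
  assumes "0 < k" "\<And>i. 0 < i \<Longrightarrow> i < k \<Longrightarrow> F i = 0"
  shows "(\<Sum>i\<in>{0..(k::nat)}. F i) = F 0 + (F k :: 'a::comm_monoid_add)"
proof -
  have "(\<Sum>i\<in>{0..k}. F i) = (\<Sum>i\<in>{0,k}. F i)"
  proof (rule sum.mono_neutral_right)
    show "\<forall>i\<in>{0..k} - {0, k}. F i = 0"
    proof
      fix i assume "i \<in> {0..k} - {0, k}"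
      then have "0 < i" "i < k" by auto
      then show "F i = 0" by (rule assms(2))
    qed
  qed (use assms in auto)
  then show ?thesis using assms by simp
qed

locale cfg =
  fixes m n :: nat
  assumes m4: "4 < m" and mn: "m \<le> n"
begin

abbreviation "XX \<equiv> {3, m}"

lemma cz: "f \<in> corner n XX \<Longrightarrow> fst p \<notin> insert 1 XX \<or> walk_end (fst p) (snd p) \<notin> insert 1 XX \<Longrightarrow> f p = 0"
  by (rule corner_zero)

lemma prod_vals:
  assumes f: "f \<in> corner n XX" and g: "g \<in> corner n XX"
  shows "pa_mult f g (1, []) = f (1, []) * g (1, [])"
    "pa_mult f g (3, []) = f (3, []) * g (3, [])"
    "pa_mult f g (m, []) = f (m, []) * g (m, [])"
    "pa_mult f g pC = f pC * g (1, []) + f (1, []) * g pC"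
    "pa_mult f g pU = f pU * g (1, []) + f (3, []) * g pU"
    "pa_mult f g pV = f pV * g (3, []) + f (1, []) * g pV"
    "pa_mult f g pD1 = f pD1 * g (3, []) + f (3, []) * g pD1"
    "pa_mult f g pD2 = f pD2 * g (3, []) + f (3, []) * g pD2"
    "pa_mult f g (pT m) = f (pT m) * g (m, []) + f (3, []) * g (pT m)"
proof -
  have g2: "g (1, [(1, True)]) = 0" "g (3, [(2, False)]) = 0" "g (3, [(3, True)]) = 0"
    "g (Suc 0, [(Suc 0, True)]) = 0"
    using cz[OF g] m4 by auto
  show "pa_mult f g (1, []) = f (1, []) * g (1, [])"
    "pa_mult f g (3, []) = f (3, []) * g (3, [])"
    "pa_mult f g (m, []) = f (m, []) * g (m, [])"
    by (simp_all add: pa_mult_def)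
  show "pa_mult f g pC = f pC * g (1, []) + f (1, []) * g pC"
    "pa_mult f g pU = f pU * g (1, []) + f (3, []) * g pU"
    "pa_mult f g pV = f pV * g (3, []) + f (1, []) * g pV"
    "pa_mult f g pD1 = f pD1 * g (3, []) + f (3, []) * g pD1"
    "pa_mult f g pD2 = f pD2 * g (3, []) + f (3, []) * g pD2"
    by (simp_all add: pa_mult_def pC_def pU_def pV_def pD1_def pD2_def sum_0_2 g2)
  have k: "0 < m - 3" using m4 by simp
  show "pa_mult f g (pT m) = f (pT m) * g (m, []) + f (3, []) * g (pT m)"
    unfolding pa_mult_def pT_def snd_conv fst_conv length_bpath
  proof (subst sum_ends[OF k])
    fix i assume i: "0 < i" "i < m - 3"
    have "walk_end m (take i (bpath m (m - 3))) = m - i"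
      using i by (simp add: walk_end_bpath_take)
    then have "g (m, take i (bpath m (m - 3))) = 0"
      using i by (intro cz[OF g]) auto
    then show "f (walk_end m (take i (bpath m (m - 3))), drop i (bpath m (m - 3))) *
         g (m, take i (bpath m (m - 3))) = 0" by simp
  next
    have "walk_end m (bpath m (m - 3)) = 3" using m4 by (simp add: walk_end_bpath)
    then show "f (walk_end m (take 0 (bpath m (m - 3))), drop 0 (bpath m (m - 3))) *
        g (m, take 0 (bpath m (m - 3))) +
        f (walk_end m (take (m - 3) (bpath m (m - 3))), drop (m - 3) (bpath m (m - 3))) *
        g (m, take (m - 3) (bpath m (m - 3))) =
        f (m, bpath m (m - 3)) * g (m, []) + f (3, []) * g (m, bpath m (m - 3))"
      by simp
  qed
qed

lemma valid_paths:
  "valid_path n (1, [])" "valid_path n (3, [])" "valid_path n (m, [])"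
  "valid_path n pC" "valid_path n pU" "valid_path n pV" "valid_path n pD1" "valid_path n pD2"
  "valid_path n (pT m)"
  using m4 mn
  by (auto simp: valid_path_def pC_def pU_def pV_def pD1_def pD2_def pT_def intro!: walk_ok_bpath)

lemma corner_paths:
  "(pa_path (1, []) :: path \<Rightarrow> 'k::field) \<in> corner n XX"
  "(pa_path (3, []) :: path \<Rightarrow> 'k::field) \<in> corner n XX"
  "(pa_path pC :: path \<Rightarrow> 'k::field) \<in> corner n XX"
  "(pa_path pU :: path \<Rightarrow> 'k::field) \<in> corner n XX"
  "(pa_path pV :: path \<Rightarrow> 'k::field) \<in> corner n XX"
  "(pa_path pD1 :: path \<Rightarrow> 'k::field) \<in> corner n XX"
  "(pa_path (pT m) :: path \<Rightarrow> 'k::field) \<in> corner n XX"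
  using valid_paths m4
  by (auto intro!: corner_path simp: pC_def pU_def pV_def pD1_def pT_def walk_end_bpath)

end



definition xw :: "'k::field ncpoly" where "xw = (\<lambda>w. if w = [True] then 1 else 0)"
definition yw :: "'k::field ncpoly" where "yw = (\<lambda>w. if w = [False] then 1 else 0)"
definition lin :: "'k \<Rightarrow> 'k \<Rightarrow> 'k \<Rightarrow> 'k::field ncpoly" where
  "lin a b c = (\<lambda>w. a * nc_one w + b * xw w + c * yw w)"

definition CA :: "nat \<Rightarrow> (path \<Rightarrow> 'k::field) \<Rightarrow> nat \<Rightarrow> nat \<Rightarrow> 'k" where
  "CA m f b c = (if b = c then (if b < 4 then f (1, []) else if b < 8 then f (3, []) else f (m, []))
     else if (b = 2 \<and> c = 0) \<or> (b = 3 \<and> c = 1) then f pC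
     else if (b = 6 \<and> c = 0) \<or> (b = 7 \<and> c = 1) then f pU
     else if (b = 2 \<and> c = 4) \<or> (b = 3 \<and> c = 5) then f pV
     else if b = 7 \<and> c = 4 then f pD1 + f pD2
     else if b = 6 \<and> c = 8 then f (pT m) else 0)"

definition CB :: "(path \<Rightarrow> 'k::field) \<Rightarrow> nat \<Rightarrow> nat \<Rightarrow> 'k" where
  "CB f b c = (if b = 6 \<and> c = 5 then f pD1 + f pD2 else 0)"

definition CC :: "(path \<Rightarrow> 'k::field) \<Rightarrow> nat \<Rightarrow> nat \<Rightarrow> 'k" where
  "CC f b c = (if b = 7 \<and> c = 5 then f pD1 + f pD2 else 0)"

definition Phi :: "nat \<Rightarrow> (path \<Rightarrow> 'k::field) \<Rightarrow> nat \<Rightarrow> nat \<Rightarrow> 'k ncpoly" where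
  "Phi m f b c = lin (CA m f b c) (CB f b c) (CC f b c)"

lemma lin_long: "2 \<le> length u \<Longrightarrow> lin a b c u = 0"
  by (auto simp: lin_def nc_one_def xw_def yw_def)

lemma nc_mult_lin:
  "nc_mult (lin a b c) (lin a' b' c') w =
     a * a' * nc_one w + (a * b' + b * a') * xw w + (a * c' + c * a') * yw w
     + b * b' * (if w = [True, True] then 1 else 0) + b * c' * (if w = [True, False] then 1 else 0)
     + c * b' * (if w = [False, True] then 1 else 0) + c * c' * (if w = [False, False] then 1 else 0)"
proof (cases "length w \<le> 2")
  case True
  then consider "w = []" | x where "w = [x]" | x y where "w = [x, y]"
    by (cases w; cases "tl w"; auto simp: le_Suc_eq)
  then show ?thesis
  proof cases
    case 1 then show ?thesis by (simp add: nc_mult_def lin_def nc_one_def xw_def yw_def)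
  next
    case (2 x) then show ?thesis
      by (cases x) (simp_all add: nc_mult_def lin_def nc_one_def xw_def yw_def algebra_simps)
  next
    case (3 x y) then show ?thesis
      by (cases x; cases y) (simp_all add: nc_mult_def lin_def nc_one_def xw_def yw_def sum_0_2 algebra_simps)
  qed
next
  case False
  have "nc_mult (lin a b c) (lin a' b' c') w = 0"
    unfolding nc_mult_def
  proof (rule sum.neutral, intro ballI)
    fix i assume "i \<in> {0..length w}"
    then show "lin a b c (take i w) * lin a' b' c' (drop i w) = 0"
      using False by (cases "2 \<le> i") (auto simp: lin_long)
  qed
  then show ?thesis using False by (auto simp: nc_one_def xw_def yw_def)
qed

lemma sum9: "(\<Sum>l<(9::nat). F l) = F 0 + F 1 + F 2 + F 3 + F 4 + F 5 + F 6 + F 7 + (F 8 :: 'a::comm_monoid_add)"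
  by (simp add: eval_nat_numeral add.assoc)

lemma pT_ne: "4 < m \<Longrightarrow> pT m \<noteq> (v, [])"
proof -
  assume "4 < m"
  then obtain k where "m - 3 = Suc k" by (cases "m - 3") auto
  then show ?thesis by (simp add: pT_def)
qed

context cfg
begin

lemma m_facts: "m \<noteq> 1" "m \<noteq> 3" "m \<noteq> 2" "m \<noteq> 4" "m \<noteq> Suc 0" using m4 by auto

lemma pT_neqs: "pT m \<noteq> (1, [])" "pT m \<noteq> (3, [])" "pT m \<noteq> (m, [])" "pT m \<noteq> pC" "pT m \<noteq> pU"
  "pT m \<noteq> pV" "pT m \<noteq> pD1" "pT m \<noteq> pD2"
  using pT_ne[OF m4] m_facts by (auto simp: pT_def pC_def pU_def pV_def pD1_def pD2_def)

lemma all9: "(\<forall>b<(9::nat). P b) \<longleftrightarrow> P 0 \<and> P 1 \<and> P 2 \<and> P 3 \<and> P 4 \<and> P 5 \<and> P 6 \<and> P 7 \<and> P 8"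
  by (simp add: eval_nat_numeral less_Suc_eq) blast

lemma t1:
  assumes f: "f \<in> corner n XX" and g: "g \<in> corner n XX"
  shows "\<forall>b<9. \<forall>c<9. (\<Sum>l<9. CA m f b l * CA m g l c) = CA m (pa_mult f g) b c"
proof -
  note pv = prod_vals[OF f g] prod_vals[OF f g, unfolded One_nat_def]
  show ?thesis unfolding all9 by (simp add: sum9 CA_def pv algebra_simps)
qed
lemma t2:
  assumes f: "f \<in> corner n XX" and g: "g \<in> corner n XX"
  shows "\<forall>b<9. \<forall>c<9. (\<Sum>l<9. CA m f b l * CB g l c + CB f b l * CA m g l c) = CB (pa_mult f g) b c"
proof -
  note pv = prod_vals[OF f g] prod_vals[OF f g, unfolded One_nat_def]
  show ?thesis unfolding all9 by (simp add: sum9 CA_def CB_def pv algebra_simps)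
qed

lemma t3:
  assumes f: "f \<in> corner n XX" and g: "g \<in> corner n XX"
  shows "\<forall>b<9. \<forall>c<9. (\<Sum>l<9. CA m f b l * CC g l c + CC f b l * CA m g l c) = CC (pa_mult f g) b c"
proof -
  note pv = prod_vals[OF f g] prod_vals[OF f g, unfolded One_nat_def]
  show ?thesis unfolding all9 by (simp add: sum9 CA_def CC_def pv algebra_simps)
qed

lemma quad_coeffs:
  "(\<Sum>l<9. CB f b l * CB g l c) = 0" "(\<Sum>l<9. CB f b l * CC g l c) = 0"
  "(\<Sum>l<9. CC f b l * CB g l c) = 0" "(\<Sum>l<9. CC f b l * CC g l c) = 0"
  by (auto simp: CB_def CC_def intro!: sum.neutral)

lemma Phi_mult:
  assumes f: "f \<in> corner n XX" and g: "g \<in> corner n XX" and b: "b < 9" and c: "c < 9"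
  shows "Phi m (pa_mult f g) b c = (\<lambda>w. \<Sum>l<9. nc_mult (Phi m f b l) (Phi m g l c) w)"
proof (rule ext)
  fix w
  have "(\<Sum>l<9. nc_mult (Phi m f b l) (Phi m g l c) w) =
     (\<Sum>l<9. CA m f b l * CA m g l c) * nc_one w
     + (\<Sum>l<9. CA m f b l * CB g l c + CB f b l * CA m g l c) * xw w
     + (\<Sum>l<9. CA m f b l * CC g l c + CC f b l * CA m g l c) * yw w
     + (\<Sum>l<9. CB f b l * CB g l c) * (if w = [True, True] then 1 else 0)
     + (\<Sum>l<9. CB f b l * CC g l c) * (if w = [True, False] then 1 else 0)
     + (\<Sum>l<9. CC f b l * CB g l c) * (if w = [False, True] then 1 else 0)
     + (\<Sum>l<9. CC f b l * CC g l c) * (if w = [False, False] then 1 else 0)"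
    by (simp add: Phi_def nc_mult_lin sum.distrib sum_distrib_right distrib_right)
  also have "\<dots> = Phi m (pa_mult f g) b c w"
    using t1[OF f g] t2[OF f g] t3[OF f g] b c by (simp add: quad_coeffs Phi_def lin_def)
  finally show "Phi m (pa_mult f g) b c w = (\<Sum>l<9. nc_mult (Phi m f b l) (Phi m g l c) w)" by simp
qed

lemma Phi_poly: "nc_poly (Phi m f b c)"
proof -
  have "{w. Phi m f b c w \<noteq> 0} \<subseteq> {[], [True], [False]}"
    by (auto simp: Phi_def lin_def nc_one_def xw_def yw_def)
  then show ?thesis unfolding nc_poly_def by (rule finite_subset) simp
qed

lemma CA_add: "CA m (pa_add f g) b c = CA m f b c + CA m g b c"
  by (simp add: CA_def pa_add_def)
lemma CB_add: "CB (pa_add f g) b c = CB f b c + CB g b c"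
  by (simp add: CB_def pa_add_def)
lemma CC_add: "CC (pa_add f g) b c = CC f b c + CC g b c"
  by (simp add: CC_def pa_add_def)
lemma CA_smult: "CA m (pa_smult a f) b c = a * CA m f b c"
  by (simp add: CA_def pa_smult_def algebra_simps)
lemma CB_smult: "CB (pa_smult a f) b c = a * CB f b c"
  by (simp add: CB_def pa_smult_def algebra_simps)
lemma CC_smult: "CC (pa_smult a f) b c = a * CC f b c"
  by (simp add: CC_def pa_smult_def algebra_simps)

lemma Phi_add: "Phi m (pa_add f g) b c = (\<lambda>w. Phi m f b c w + Phi m g b c w)"
  by (rule ext) (simp add: Phi_def lin_def CA_add CB_add CC_add algebra_simps)

lemma Phi_smult: "Phi m (pa_smult a f) b c = (\<lambda>w. a * Phi m f b c w)"
  by (rule ext) (simp add: Phi_def lin_def CA_smult CB_smult CC_smult algebra_simps)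

lemma Phi_idem: "b < 9 \<Longrightarrow> c < 9 \<Longrightarrow> Phi m (idem_X XX) b c = (if b = c then nc_one else (\<lambda>w. 0))"
  using pT_ne[OF m4] m_facts
  by (auto simp: Phi_def lin_def CA_def CB_def CC_def idem_X_def pC_def pU_def pV_def pD1_def pD2_def
      nc_one_def intro!: ext)

lemma Phi_ideal:
  assumes "f \<in> rel_ideal n"
  shows "Phi m f b c = (\<lambda>w. 0)"
proof -
  have "5 \<le> n" using m4 mn by simp
  then have gd: "good f" by (rule ideal_good[OF assms])
  then have z: "\<And>p. nobad (snd p) \<Longrightarrow> f p = 0" and s: "f pD1 + f pD2 = 0"
    unfolding good_def by auto
  have "f (1, []) = 0" "f (3, []) = 0" "f (m, []) = 0" "f pC = 0" "f pU = 0" "f pV = 0" "f (pT m) = 0"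
    by (auto intro!: z simp: pC_def pU_def pV_def pT_def bpath_nobad)
  then show ?thesis using s
    by (auto simp: Phi_def lin_def CA_def CB_def CC_def intro!: ext)
qed

lemma bimod: "is_bimod n XX 9 (Phi m)"
  unfolding is_bimod_def
  using Phi_poly Phi_add Phi_smult Phi_mult Phi_idem Phi_ideal by blast

end



lemma sum_ivl_from: "sum F {a..<a + (k::nat)} = (\<Sum>l<k. F (a + l))"
  by (induction k) (simp_all add: sum.atLeastLessThan_Suc)

lemma sum_blocks: "(\<Sum>t<n * r. F t) = (\<Sum>b<n. \<Sum>l<(r::nat). F (b * r + l))"
proof -
  have "(\<Sum>t<n * r. F t) = (\<Sum>b<n. sum F {b * r..<b * r + r})"
    using sum.nat_group[of F r n] by simp
  also have "\<dots> = (\<Sum>b<n. \<Sum>l<r. F (b * r + l))"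
    by (rule sum.cong[OF refl]) (simp add: sum_ivl_from)
  finally show ?thesis .
qed

lemma blk_bound: "b < 9 \<Longrightarrow> i < r \<Longrightarrow> b * r + i < 9 * (r::nat)"
proof -
  assume "b < 9" "i < r"
  then have "b * r + i < b * r + r" by simp
  also have "\<dots> = Suc b * r" by simp
  also have "\<dots> \<le> 9 * r" using \<open>b < 9\<close> by (intro mult_right_mono) auto
  finally show ?thesis .
qed

lemma blk_div: "i < r \<Longrightarrow> (b * r + i) div r = (b::nat)" by simp
lemma blk_mod: "i < r \<Longrightarrow> (b * r + i) mod r = (i::nat)" by simp

definition sb :: "'a mat \<Rightarrow> nat \<Rightarrow> nat \<Rightarrow> nat \<Rightarrow> nat \<Rightarrow> nat \<Rightarrow> 'a" where
  "sb S r b c i j = S $$ (b * r + i, c * r + j)"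

definition SX :: "'a::semiring_0 mat \<Rightarrow> nat \<Rightarrow> nat \<Rightarrow> nat \<Rightarrow> 'a mat \<Rightarrow> nat \<Rightarrow> nat \<Rightarrow> 'a" where
  "SX S r b c X i j = (\<Sum>l<r. sb S r b c i l * X $$ (l, j))"

definition XS :: "'a::semiring_0 mat \<Rightarrow> 'a mat \<Rightarrow> nat \<Rightarrow> nat \<Rightarrow> nat \<Rightarrow> nat \<Rightarrow> nat \<Rightarrow> 'a" where
  "XS X S r b c i j = (\<Sum>l<r. X $$ (i, l) * sb S r b c l j)"

lemma mult_blocks:
  assumes "A \<in> carrier_mat (9 * r) (9 * r)" "B \<in> carrier_mat (9 * r) (9 * r)"
    "b < 9" "c < 9" "i < r" "j < r"
  shows "(A * B) $$ (b * r + i, c * r + j) = (\<Sum>b'<9. \<Sum>l<r. sb A r b b' i l * sb B r b' c l j)"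
proof -
  have "(A * B) $$ (b * r + i, c * r + j) = (\<Sum>t<9 * r. A $$ (b * r + i, t) * B $$ (t, c * r + j))"
    using assms blk_bound[of b i r] blk_bound[of c j r]
    by (simp add: scalar_prod_def atLeast0LessThan)
  also have "\<dots> = (\<Sum>b'<9. \<Sum>l<r. sb A r b b' i l * sb B r b' c l j)"
    unfolding sum_blocks sb_def ..
  finally show ?thesis .
qed

lemma nc_eval_lin:
  assumes X: "X \<in> carrier_mat r r" and Y: "Y \<in> carrier_mat r r" and i: "i < r" and j: "j < r"
  shows "nc_eval r (lin a b c) X Y $$ (i, j) = a * (if i = j then 1 else 0) + b * X $$ (i, j) + c * Y $$ (i, j)"
proof -
  have fin: "finite {[], [True], [False]}" by simp
  have sub: "{w. lin a b c w \<noteq> 0} \<subseteq> {[], [True], [False]}"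
    by (auto simp: lin_def nc_one_def xw_def yw_def)
  have "nc_eval r (lin a b c) X Y $$ (i, j) =
      (\<Sum>w\<in>{w. lin a b c w \<noteq> 0}. lin a b c w * word_mat r X Y w $$ (i, j))"
    using i j by (simp add: nc_eval_def)
  also have "\<dots> = (\<Sum>w\<in>{[], [True], [False]}. lin a b c w * word_mat r X Y w $$ (i, j))"
    by (rule sum.mono_neutral_left[OF fin sub]) auto
  also have "\<dots> = a * (if i = j then 1 else 0) + b * X $$ (i, j) + c * Y $$ (i, j)"
    using X Y i j by (simp add: lin_def nc_one_def xw_def yw_def algebra_simps)
  finally show ?thesis .
qed

lemma ifmult: "(if P then a else 0) * (t::'a::mult_zero) = (if P then a * t else 0)" by simp

context cfg
begin

definition TT :: "nat \<Rightarrow> 'k::field mat \<Rightarrow> 'k mat \<Rightarrow> (path \<Rightarrow> 'k) \<Rightarrow> 'k mat" where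
  "TT r X Y f = tensor_rep 9 (Phi m) r X Y f"

lemma TT_carrier: "TT r X Y f \<in> carrier_mat (9 * r) (9 * r)"
  by (simp add: TT_def tensor_rep_def)

lemma TT_blk:
  assumes X: "X \<in> carrier_mat r r" and Y: "Y \<in> carrier_mat r r"
    and b: "b < 9" and c: "c < 9" and i: "i < r" and j: "j < r"
  shows "sb (TT r X Y f) r b c i j = CA m f b c * (if i = j then 1 else 0) + CB f b c * X $$ (i, j) + CC f b c * Y $$ (i, j)"
  using blk_bound[OF b i] blk_bound[OF c j] i j
  by (simp add: sb_def TT_def tensor_rep_def Phi_def nc_eval_lin[OF X Y i j])

lemma left_block:
  assumes S: "S \<in> carrier_mat (9 * r) (9 * r)" and X: "X \<in> carrier_mat r r" and Y: "Y \<in> carrier_mat r r"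
    and b: "b < 9" and c: "c < 9" and i: "i < r" and j: "j < r"
  shows "(S * TT r X Y f) $$ (b * r + i, c * r + j) =
    (\<Sum>b'<9. CA m f b' c * sb S r b b' i j + CB f b' c * SX S r b b' X i j + CC f b' c * SX S r b b' Y i j)"
proof -
  have "(S * TT r X Y f) $$ (b * r + i, c * r + j) = (\<Sum>b'<9. \<Sum>l<r. sb S r b b' i l * sb (TT r X Y f) r b' c l j)"
    by (rule mult_blocks[OF S TT_carrier b c i j])
  also have "\<dots> = (\<Sum>b'<9. CA m f b' c * sb S r b b' i j + CB f b' c * SX S r b b' X i j + CC f b' c * SX S r b b' Y i j)"
  proof (rule sum.cong[OF refl])
    fix b' :: nat assume b': "b' \<in> {..<9}"
    have "(\<Sum>l<r. sb S r b b' i l * sb (TT r X Y f) r b' c l j) =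
       (\<Sum>l<r. (if l = j then CA m f b' c * sb S r b b' i l else 0) + CB f b' c * (sb S r b b' i l * X $$ (l, j))
          + CC f b' c * (sb S r b b' i l * Y $$ (l, j)))"
      by (rule sum.cong[OF refl]) (use b' c j in \<open>simp add: TT_blk[OF X Y] algebra_simps\<close>)
    also have "\<dots> = CA m f b' c * sb S r b b' i j + CB f b' c * SX S r b b' X i j + CC f b' c * SX S r b b' Y i j"
      using j by (simp add: sum.distrib SX_def sum_distrib_left)
    finally show "(\<Sum>l<r. sb S r b b' i l * sb (TT r X Y f) r b' c l j) =
       CA m f b' c * sb S r b b' i j + CB f b' c * SX S r b b' X i j + CC f b' c * SX S r b b' Y i j" .
  qed
  finally show ?thesis .
qed

lemma right_block:
  assumes S: "S \<in> carrier_mat (9 * r) (9 * r)" and X: "X \<in> carrier_mat r r" and Y: "Y \<in> carrier_mat r r"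
    and b: "b < 9" and c: "c < 9" and i: "i < r" and j: "j < r"
  shows "(TT r X Y f * S) $$ (b * r + i, c * r + j) =
    (\<Sum>b'<9. CA m f b b' * sb S r b' c i j + CB f b b' * XS X S r b' c i j + CC f b b' * XS Y S r b' c i j)"
proof -
  have "(TT r X Y f * S) $$ (b * r + i, c * r + j) = (\<Sum>b'<9. \<Sum>l<r. sb (TT r X Y f) r b b' i l * sb S r b' c l j)"
    by (rule mult_blocks[OF TT_carrier S b c i j])
  also have "\<dots> = (\<Sum>b'<9. CA m f b b' * sb S r b' c i j + CB f b b' * XS X S r b' c i j + CC f b b' * XS Y S r b' c i j)"
  proof (rule sum.cong[OF refl])
    fix b' :: nat assume b': "b' \<in> {..<9}"
    have "(\<Sum>l<r. sb (TT r X Y f) r b b' i l * sb S r b' c l j) =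
       (\<Sum>l<r. (if l = i then CA m f b b' * sb S r b' c l j else 0) + CB f b b' * (X $$ (i, l) * sb S r b' c l j)
          + CC f b b' * (Y $$ (i, l) * sb S r b' c l j))"
      by (rule sum.cong[OF refl]) (use b' b i in \<open>simp add: TT_blk[OF X Y] algebra_simps\<close>)
    also have "\<dots> = CA m f b b' * sb S r b' c i j + CB f b b' * XS X S r b' c i j + CC f b b' * XS Y S r b' c i j"
      using i by (simp add: sum.distrib XS_def sum_distrib_left)
    finally show "(\<Sum>l<r. sb (TT r X Y f) r b b' i l * sb S r b' c l j) =
       CA m f b b' * sb S r b' c i j + CB f b b' * XS X S r b' c i j + CC f b b' * XS Y S r b' c i j" .
  qed
  finally show ?thesis .
qed

end



definition free :: "nat \<Rightarrow> nat \<Rightarrow> bool" where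
  "free b c \<longleftrightarrow> ((b = 2 \<or> b = 3) \<and> (c = 0 \<or> c = 1)) \<or> ((b = 6 \<or> b = 7) \<and> (c = 4 \<or> c = 5))"

lemma free_chain: "free b b' \<Longrightarrow> free b' c \<Longrightarrow> False"
  by (auto simp: free_def)

definition blockform :: "'a::zero mat \<Rightarrow> nat \<Rightarrow> bool" where
  "blockform S r \<longleftrightarrow> (\<forall>b<9. \<forall>i<r. \<forall>j<r. sb S r b b i j = sb S r 0 0 i j) \<and>
     (\<forall>b<9. \<forall>c<9. b \<noteq> c \<longrightarrow> \<not> free b c \<longrightarrow> (\<forall>i<r. \<forall>j<r. sb S r b c i j = 0))"

lemma bpath_ne: "4 < m \<Longrightarrow> bpath m (m - 3) \<noteq> []"
proof -
  assume "4 < m"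
  then obtain k where "m - 3 = Suc k" by (cases "m - 3") auto
  then show ?thesis by simp
qed

lemma zeros_gen:
  assumes e1: "\<And>b c. b < 9 \<Longrightarrow> c < 9 \<Longrightarrow> (b < 4) \<noteq> (c < (4::nat)) \<Longrightarrow> sb S r b c i j = 0"
    and e3: "\<And>b c. b < 9 \<Longrightarrow> c < 9 \<Longrightarrow> (4 \<le> b \<and> b < 8) \<noteq> (4 \<le> c \<and> c < (8::nat)) \<Longrightarrow> sb S r b c i j = 0"
    and Z: "sb S r 0 1 i j = 0 \<and> sb S r 1 0 i j = 0 \<and> sb S r 0 2 i j = 0 \<and> sb S r 1 2 i j = 0
      \<and> sb S r 0 3 i j = 0 \<and> sb S r 1 3 i j = 0 \<and> sb S r 2 3 i j = 0 \<and> sb S r 3 2 i j = 0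
      \<and> sb S r 4 5 i j = 0 \<and> sb S r 5 4 i j = 0 \<and> sb S r 4 6 i j = 0 \<and> sb S r 5 6 i j = 0
      \<and> sb S r 4 7 i j = 0 \<and> sb S r 5 7 i j = 0 \<and> sb S r 6 7 i j = 0 \<and> sb S r 7 6 i j = (0::'a::zero)"
    and b: "b < 9" and c: "c < 9" and bc: "b \<noteq> c" and nf: "\<not> free b c"
  shows "sb S r b c i j = 0"
proof -
  have bs: "b = 0 \<or> b = 1 \<or> b = 2 \<or> b = 3 \<or> b = 4 \<or> b = 5 \<or> b = 6 \<or> b = 7 \<or> b = 8"
    using b by auto
  have cs: "c = 0 \<or> c = 1 \<or> c = 2 \<or> c = 3 \<or> c = 4 \<or> c = 5 \<or> c = 6 \<or> c = 7 \<or> c = 8"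
    using c by auto
  have "(b < 4) \<noteq> (c < 4) \<or> (4 \<le> b \<and> b < 8) \<noteq> (4 \<le> c \<and> c < 8) \<or>
     (b, c) \<in> {(0,1),(1,0),(0,2),(1,2),(0,3),(1,3),(2,3),(3,2),(4,5),(5,4),(4,6),(5,6),(4,7),(5,7),(6,7),(7,6)}"
    using bs cs bc nf by (elim disjE) (simp_all add: free_def)
  then show ?thesis
  proof (elim disjE)
    assume "(b < 4) \<noteq> (c < 4)" then show ?thesis using e1 b c by blast
  next
    assume "(4 \<le> b \<and> b < 8) \<noteq> (4 \<le> c \<and> c < 8)" then show ?thesis using e3 b c by blast
  next
    assume "(b, c) \<in> {(0,1),(1,0),(0,2),(1,2),(0,3),(1,3),(2,3),(3,2),(4,5),(5,4),(4,6),(5,6),(4,7),(5,7),(6,7),(7,6)}"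
    then show ?thesis using Z by auto
  qed
qed

lemma blockform_intro:
  assumes "\<And>b i j. b < 9 \<Longrightarrow> i < r \<Longrightarrow> j < r \<Longrightarrow> sb S r b b i j = sb S r 0 0 i j"
    and "\<And>b c i j. b < 9 \<Longrightarrow> c < 9 \<Longrightarrow> b \<noteq> c \<Longrightarrow> \<not> free b c \<Longrightarrow> i < r \<Longrightarrow> j < r \<Longrightarrow> sb S r b c i j = 0"
  shows "blockform S r"
  unfolding blockform_def using assms by blast

context cfg
begin

lemmas psimps = CA_def CB_def CC_def pa_path_def pC_def pU_def pV_def pD1_def pD2_def pT_def
  m_facts bpath_ne[OF m4] sum9 m_facts[THEN not_sym] bpath_ne[OF m4, THEN not_sym]

lemma comm_eq:
  assumes S: "S \<in> carrier_mat (9 * r) (9 * r)"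
    and X1: "X1 \<in> carrier_mat r r" and Y1: "Y1 \<in> carrier_mat r r"
    and X2: "X2 \<in> carrier_mat r r" and Y2: "Y2 \<in> carrier_mat r r"
    and comm: "\<forall>f\<in>corner n XX. S * TT r X1 Y1 f = TT r X2 Y2 f * S"
    and f: "f \<in> corner n XX" and b: "b < 9" and c: "c < 9" and i: "i < r" and j: "j < r"
  shows "(\<Sum>b'<9. CA m f b' c * sb S r b b' i j + CB f b' c * SX S r b b' X1 i j + CC f b' c * SX S r b b' Y1 i j)
       = (\<Sum>b'<9. CA m f b b' * sb S r b' c i j + CB f b b' * XS X2 S r b' c i j + CC f b b' * XS Y2 S r b' c i j)"
  using left_block[OF S X1 Y1 b c i j, of f] right_block[OF S X2 Y2 b c i j, of f] comm f by simp

lemma CA_e1: "CA m (pa_path (1, [])) b c = (if b = c then (if c < 4 then 1 else 0) else 0)"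
  by (simp add: psimps)
lemma CA_e3: "CA m (pa_path (3, [])) b c = (if b = c then (if 4 \<le> c \<and> c < 8 then 1 else 0) else 0)"
  by (auto simp: psimps)
lemma CB_e: "CB (pa_path (1, [])) b c = 0" "CB (pa_path (3, [])) b c = 0"
  by (simp_all add: psimps)
lemma CC_e: "CC (pa_path (1, [])) b c = 0" "CC (pa_path (3, [])) b c = 0"
  by (simp_all add: psimps)

lemma SX_zero: "(\<And>l. l < r \<Longrightarrow> sb S r b c i l = 0) \<Longrightarrow> SX S r b c X i j = 0"
  by (simp add: SX_def)
lemma XS_zero: "(\<And>l. l < r \<Longrightarrow> sb S r b c l j = 0) \<Longrightarrow> XS X S r b c i j = 0"
  by (simp add: XS_def)
lemma SX_cong: "(\<And>l. l < r \<Longrightarrow> sb S r b c i l = sb S r b' c' i l) \<Longrightarrow> SX S r b c X i j = SX S r b' c' X i j"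
  by (simp add: SX_def)
lemma XS_cong: "(\<And>l. l < r \<Longrightarrow> sb S r b c l j = sb S r b' c' l j) \<Longrightarrow> XS X S r b c i j = XS X S r b' c' i j"
  by (simp add: XS_def)

lemma blockstruct:
  assumes S: "S \<in> carrier_mat (9 * r) (9 * r)"
    and X1: "X1 \<in> carrier_mat r r" and Y1: "Y1 \<in> carrier_mat r r"
    and X2: "X2 \<in> carrier_mat r r" and Y2: "Y2 \<in> carrier_mat r r"
    and comm: "\<forall>f\<in>corner n XX. S * TT r X1 Y1 f = TT r X2 Y2 f * S"
  shows "blockform S r"
    "\<forall>i<r. \<forall>j<r. SX S r 0 0 X1 i j = XS X2 S r 0 0 i j"
    "\<forall>i<r. \<forall>j<r. SX S r 0 0 Y1 i j = XS Y2 S r 0 0 i j"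
proof -
  note ce = comm_eq[OF S X1 Y1 X2 Y2 comm]
  note cp = corner_paths
  let ?s = "sb S r"
  have e1: "?s b c i j = 0" if "b < 9" "c < 9" "(b < 4) \<noteq> (c < 4)" "i < r" "j < r" for b c i j
    using ce[OF cp(1) that(1,2,4,5)] that(3)
    by (simp add: CA_e1 CB_e CC_e CA_e1[unfolded One_nat_def] CB_e[unfolded One_nat_def] CC_e[unfolded One_nat_def] ifmult sum.delta sum.delta' that(1,2) split: if_splits)
  have e3: "?s b c i j = 0" if "b < 9" "c < 9" "(4 \<le> b \<and> b < 8) \<noteq> (4 \<le> c \<and> c < 8)" "i < r" "j < r" for b c i j
    using ce[OF cp(2) that(1,2,4,5)] that(3)
    by (simp add: CA_e3 CB_e CC_e ifmult sum.delta sum.delta' that(1,2) split: if_splits)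
  have C: "?s 2 2 i j = ?s 0 0 i j" "?s 3 3 i j = ?s 1 1 i j" "?s 0 2 i j = 0" "?s 1 2 i j = 0"
      "?s 0 3 i j = 0" "?s 1 3 i j = 0" "?s 3 2 i j = ?s 1 0 i j" "?s 2 3 i j = ?s 0 1 i j"
    if "i < r" "j < r" for i j
    using ce[OF cp(3) _ _ that, of 2 0] ce[OF cp(3) _ _ that, of 3 1] ce[OF cp(3) _ _ that, of 0 0]
      ce[OF cp(3) _ _ that, of 1 0] ce[OF cp(3) _ _ that, of 0 1] ce[OF cp(3) _ _ that, of 1 1]
      ce[OF cp(3) _ _ that, of 3 0] ce[OF cp(3) _ _ that, of 2 1]
    by (simp_all add: psimps)
  have U: "?s 6 6 i j = ?s 0 0 i j" "?s 7 7 i j = ?s 1 1 i j" "?s 4 6 i j = 0" "?s 5 6 i j = 0"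
      "?s 4 7 i j = 0" "?s 5 7 i j = 0" "?s 7 6 i j = ?s 1 0 i j" "?s 6 7 i j = ?s 0 1 i j"
    if "i < r" "j < r" for i j
    using ce[OF cp(4) _ _ that, of 6 0] ce[OF cp(4) _ _ that, of 7 1] ce[OF cp(4) _ _ that, of 4 0]
      ce[OF cp(4) _ _ that, of 5 0] ce[OF cp(4) _ _ that, of 4 1] ce[OF cp(4) _ _ that, of 5 1]
      ce[OF cp(4) _ _ that, of 7 0] ce[OF cp(4) _ _ that, of 6 1]
    by (simp_all add: psimps)
  have V: "?s 2 2 i j = ?s 4 4 i j" "?s 3 3 i j = ?s 5 5 i j" "?s 3 2 i j = ?s 5 4 i j" "?s 2 3 i j = ?s 4 5 i j"
    if "i < r" "j < r" for i j
    using ce[OF cp(5) _ _ that, of 2 4] ce[OF cp(5) _ _ that, of 3 5] ce[OF cp(5) _ _ that, of 3 4]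
      ce[OF cp(5) _ _ that, of 2 5]
    by (simp_all add: psimps)
  have T: "?s 6 6 i j = ?s 8 8 i j" "?s 7 6 i j = 0"
    if "i < r" "j < r" for i j
    using ce[OF cp(7) _ _ that, of 6 8] ce[OF cp(7) _ _ that, of 7 8]
    by (simp_all add: psimps)
  have D: "?s 6 7 i j = XS X2 S r 5 4 i j" "?s 7 7 i j = ?s 4 4 i j + XS Y2 S r 5 4 i j"
     "SX S r 6 6 X1 i j + SX S r 6 7 Y1 i j = XS X2 S r 5 5 i j"
     "SX S r 7 6 X1 i j + SX S r 7 7 Y1 i j = ?s 4 5 i j + XS Y2 S r 5 5 i j"
    if "i < r" "j < r" for i j
    using ce[OF cp(6) _ _ that, of 6 4] ce[OF cp(6) _ _ that, of 7 4] ce[OF cp(6) _ _ that, of 6 5]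
      ce[OF cp(6) _ _ that, of 7 5]
    by (simp_all add: psimps)
  have z10: "?s 1 0 i j = 0" if "i < r" "j < r" for i j using T(2)[OF that] U(7)[OF that] by simp
  have z32: "?s 3 2 i j = 0" if "i < r" "j < r" for i j using C(7)[OF that] z10[OF that] by simp
  have z54: "?s 5 4 i j = 0" if "i < r" "j < r" for i j using V(3)[OF that] z32[OF that] by simp
  have z67: "?s 6 7 i j = 0" if "i < r" "j < r" for i j
    using D(1)[OF that] XS_zero[of r S 5 4 j X2 i] z54 that by simp
  have z01: "?s 0 1 i j = 0" if "i < r" "j < r" for i j using U(8)[OF that] z67[OF that] by simp
  have z23: "?s 2 3 i j = 0" if "i < r" "j < r" for i j using C(8)[OF that] z01[OF that] by simp
  have z45: "?s 4 5 i j = 0" if "i < r" "j < r" for i j using V(4)[OF that] z23[OF that] by simp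
  have d77: "?s 7 7 i j = ?s 4 4 i j" if "i < r" "j < r" for i j
    using D(2)[OF that] XS_zero[of r S 5 4 j Y2 i] z54 that by simp
  have diag: "?s b b i j = ?s 0 0 i j" if "b < 9" "i < r" "j < r" for b i j
  proof -
    have a: "?s 2 2 i j = ?s 0 0 i j" "?s 4 4 i j = ?s 0 0 i j" "?s 6 6 i j = ?s 0 0 i j"
      "?s 8 8 i j = ?s 0 0 i j" "?s 7 7 i j = ?s 0 0 i j" "?s 1 1 i j = ?s 0 0 i j"
      "?s 3 3 i j = ?s 0 0 i j" "?s 5 5 i j = ?s 0 0 i j"
      using C(1,2)[OF that(2,3)] U(1,2)[OF that(2,3)] V(1,2)[OF that(2,3)] T(1)[OF that(2,3)]
        d77[OF that(2,3)] by simp_all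
    have "b = 0 \<or> b = 1 \<or> b = 2 \<or> b = 3 \<or> b = 4 \<or> b = 5 \<or> b = 6 \<or> b = 7 \<or> b = 8"
      using that(1) by auto
    then show ?thesis using a by auto
  qed
  have Z: "sb S r 0 1 i j = 0 \<and> sb S r 1 0 i j = 0 \<and> sb S r 0 2 i j = 0 \<and> sb S r 1 2 i j = 0
      \<and> sb S r 0 3 i j = 0 \<and> sb S r 1 3 i j = 0 \<and> sb S r 2 3 i j = 0 \<and> sb S r 3 2 i j = 0
      \<and> sb S r 4 5 i j = 0 \<and> sb S r 5 4 i j = 0 \<and> sb S r 4 6 i j = 0 \<and> sb S r 5 6 i j = 0
      \<and> sb S r 4 7 i j = 0 \<and> sb S r 5 7 i j = 0 \<and> sb S r 6 7 i j = 0 \<and> sb S r 7 6 i j = 0"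
    if ij: "i < r" "j < r" for i j
    using z01[OF ij] z10[OF ij] C(3-6)[OF ij] z23[OF ij] z32[OF ij] z45[OF ij] z54[OF ij] U(3-6)[OF ij]
      z67[OF ij] T(2)[OF ij] by (intro conjI) assumption+
  have zz: "sb S r b c i j = 0"
    if h: "b < 9" "c < 9" "b \<noteq> c" "\<not> free b c" "i < r" "j < r" for b c i j :: nat
  proof -
    have e1': "sb S r b c i j = 0" if "b < 9" "c < 9" "(b < 4) \<noteq> (c < 4)" for b c :: nat
      using e1[OF that h(5,6)] .
    have e3': "sb S r b c i j = 0" if "b < 9" "c < 9" "(4 \<le> b \<and> b < 8) \<noteq> (4 \<le> c \<and> c < 8)" for b c :: nat
      using e3[OF that h(5,6)] .
    show ?thesis
      using zeros_gen[of S r i j, OF e1' e3' Z[OF h(5,6)] h(1-4)] .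
  qed
  show "blockform S r"
    by (rule blockform_intro[OF diag zz])
  show "\<forall>i<r. \<forall>j<r. SX S r 0 0 X1 i j = XS X2 S r 0 0 i j"
  proof (intro allI impI)
    fix i j assume ij: "i < r" "j < r"
    have "SX S r 6 7 Y1 i j = 0" by (rule SX_zero) (use z67 ij in auto)
    then have "SX S r 6 6 X1 i j = XS X2 S r 5 5 i j" using D(3)[OF ij] by simp
    moreover have "SX S r 6 6 X1 i j = SX S r 0 0 X1 i j" by (rule SX_cong, rule diag) (use ij in auto)
    moreover have "XS X2 S r 5 5 i j = XS X2 S r 0 0 i j" by (rule XS_cong, rule diag) (use ij in auto)
    ultimately show "SX S r 0 0 X1 i j = XS X2 S r 0 0 i j" by simp
  qed
  show "\<forall>i<r. \<forall>j<r. SX S r 0 0 Y1 i j = XS Y2 S r 0 0 i j"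
  proof (intro allI impI)
    fix i j assume ij: "i < r" "j < r"
    have "SX S r 7 6 X1 i j = 0" by (rule SX_zero) (use T(2) ij in auto)
    then have "SX S r 7 7 Y1 i j = XS Y2 S r 5 5 i j" using D(4)[OF ij] z45[OF ij] by simp
    moreover have "SX S r 7 7 Y1 i j = SX S r 0 0 Y1 i j" by (rule SX_cong, rule diag) (use ij in auto)
    moreover have "XS Y2 S r 5 5 i j = XS Y2 S r 0 0 i j" by (rule XS_cong, rule diag) (use ij in auto)
    ultimately show "SX S r 0 0 Y1 i j = XS Y2 S r 0 0 i j" by simp
  qed
qed

end



lemma sum_two:
  assumes "b \<noteq> c" "b \<in> A" "c \<in> A" "finite A" "\<And>x. x \<in> A \<Longrightarrow> x \<noteq> b \<Longrightarrow> x \<noteq> c \<Longrightarrow> F x = 0"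
  shows "sum F A = F b + (F c :: 'a::comm_monoid_add)"
proof -
  have "sum F A = sum F {b, c}"
    by (rule sum.mono_neutral_right) (use assms in auto)
  then show ?thesis using assms(1) by simp
qed

lemma sum_one:
  assumes "b \<in> A" "finite A" "\<And>x. x \<in> A \<Longrightarrow> x \<noteq> b \<Longrightarrow> F x = 0"
  shows "sum F A = (F b :: 'a::comm_monoid_add)"
proof -
  have "sum F A = sum F {b}"
    by (rule sum.mono_neutral_right) (use assms in auto)
  then show ?thesis by simp
qed

context cfg
begin

lemma bf_zero: "blockform S r \<Longrightarrow> b < 9 \<Longrightarrow> c < 9 \<Longrightarrow> b \<noteq> c \<Longrightarrow> \<not> free b c \<Longrightarrow> i < r \<Longrightarrow> j < r \<Longrightarrow> sb S r b c i j = 0"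
  unfolding blockform_def by blast

lemma bf_diag: "blockform S r \<Longrightarrow> b < 9 \<Longrightarrow> i < r \<Longrightarrow> j < r \<Longrightarrow> sb S r b b i j = sb S r 0 0 i j"
  unfolding blockform_def by blast

lemma row0_mult:
  assumes A: "A \<in> carrier_mat (9 * r) (9 * r)" and B: "B \<in> carrier_mat (9 * r) (9 * r)"
    and bf: "blockform A r" and i: "i < r" and j: "j < r"
  shows "(A * B) $$ (i, j) = (\<Sum>l<r. sb A r 0 0 i l * sb B r 0 0 l j)"
proof -
  have "(A * B) $$ (0 * r + i, 0 * r + j) = (\<Sum>b'<9. \<Sum>l<r. sb A r 0 b' i l * sb B r b' 0 l j)"
    by (rule mult_blocks[OF A B _ _ i j]) auto
  also have "\<dots> = (\<Sum>l<r. sb A r 0 0 i l * sb B r 0 0 l j)"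
  proof (rule sum_one)
    fix x assume x: "x \<in> {..<9::nat}" "x \<noteq> 0"
    have "\<not> free 0 x" by (simp add: free_def)
    then show "(\<Sum>l<r. sb A r 0 x i l * sb B r x 0 l j) = 0"
      using bf_zero[OF bf, of 0 x i] x i by simp
  qed auto
  finally show ?thesis by simp
qed

lemma phi_mat:
  assumes X: "X \<in> carrier_mat r r" and X': "X' \<in> carrier_mat r r"
    and c: "\<forall>i<r. \<forall>j<r. SX S r 0 0 X i j = XS X' S r 0 0 i j"
  shows "mat r r (\<lambda>(i, j). sb S r 0 0 i j) * X = X' * mat r r (\<lambda>(i, j). sb S r 0 0 i j)"
proof (rule eq_matI, goal_cases)
  case (1 i j)
  then have ij: "i < r" "j < r" using X' by auto
  have "(mat r r (\<lambda>(i, j). sb S r 0 0 i j) * X) $$ (i, j) = SX S r 0 0 X i j"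
    using ij X by (simp add: scalar_prod_def SX_def atLeast0LessThan)
  also have "\<dots> = XS X' S r 0 0 i j" using c ij by blast
  also have "\<dots> = (X' * mat r r (\<lambda>(i, j). sb S r 0 0 i j)) $$ (i, j)"
    using ij X' by (simp add: scalar_prod_def XS_def atLeast0LessThan)
  finally show ?case .
qed (use X X' in auto)

lemma phi_prod:
  assumes A: "A \<in> carrier_mat (9 * r) (9 * r)" and B: "B \<in> carrier_mat (9 * r) (9 * r)"
    and bf: "blockform A r"
  shows "mat r r (\<lambda>(i, j). sb A r 0 0 i j) * mat r r (\<lambda>(i, j). sb B r 0 0 i j) =
     mat r r (\<lambda>(i, j). (A * B) $$ (i, j))"
proof (rule eq_matI)
  fix i j assume "i < dim_row (mat r r (\<lambda>(i, j). (A * B) $$ (i, j)))" "j < dim_col (mat r r (\<lambda>(i, j). (A * B) $$ (i, j)))"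
  then have ij: "i < r" "j < r" by auto
  show "(mat r r (\<lambda>(i, j). sb A r 0 0 i j) * mat r r (\<lambda>(i, j). sb B r 0 0 i j)) $$ (i, j) =
      mat r r (\<lambda>(i, j). (A * B) $$ (i, j)) $$ (i, j)"
    using ij row0_mult[OF A B bf ij] by (simp add: scalar_prod_def atLeast0LessThan)
qed auto

lemma entry_blk:
  assumes "i < 9 * r" "j < 9 * r"
  shows "E $$ (i, j) = sb E r (i div r) (j div r) (i mod r) (j mod r)" "i div r < 9" "j div r < 9"
    "i mod r < r" "j mod r < r"
proof -
  have r: "0 < r" using assms by (cases r) auto
  show "E $$ (i, j) = sb E r (i div r) (j div r) (i mod r) (j mod r)"
    by (simp add: sb_def mult.commute)
  show "i div r < 9" "j div r < 9" using assms r by (simp_all add: less_mult_imp_div_less)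
  show "i mod r < r" "j mod r < r" using r by simp_all
qed

lemma indec:
  assumes X: "X \<in> carrier_mat r r" and Y: "Y \<in> carrier_mat r r" and ind: "kxy_indec r X Y"
  shows "rep_indec n XX (9 * r) (TT r X Y)"
  unfolding rep_indec_def
proof (intro conjI ballI impI)
  have r: "0 < r" using ind unfolding kxy_indec_def by simp
  then show "0 < 9 * r" by simp
  fix E assume E: "E \<in> carrier_mat (9 * r) (9 * r)"
    and h: "(\<forall>f\<in>corner n XX. E * TT r X Y f = TT r X Y f * E) \<and> E * E = E"
  have comm: "\<forall>f\<in>corner n XX. E * TT r X Y f = TT r X Y f * E" and idem: "E * E = E" using h by auto
  note bs = blockstruct[OF E X Y X Y comm]
  note bf = bs(1)
  define \<phi> where "\<phi> = mat r r (\<lambda>(i, j). sb E r 0 0 i j)"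
  have phic: "\<phi> \<in> carrier_mat r r" by (simp add: \<phi>_def)
  have pX: "\<phi> * X = X * \<phi>" unfolding \<phi>_def by (rule phi_mat[OF X X bs(2)])
  have pY: "\<phi> * Y = Y * \<phi>" unfolding \<phi>_def by (rule phi_mat[OF Y Y bs(3)])
  have pp: "\<phi> * \<phi> = \<phi>"
    unfolding \<phi>_def phi_prod[OF E E bf] idem
    by (rule eq_matI) (auto simp: sb_def)
  have "\<phi> = 0\<^sub>m r r \<or> \<phi> = 1\<^sub>m r"
    using ind phic pX pY pp unfolding kxy_indec_def by blast
  then have phv: "(\<forall>i<r. \<forall>j<r. sb E r 0 0 i j = 0) \<or> (\<forall>i<r. \<forall>j<r. sb E r 0 0 i j = (if i = j then 1 else 0))"
  proof
    assume "\<phi> = 0\<^sub>m r r"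
    then have "\<forall>i<r. \<forall>j<r. \<phi> $$ (i, j) = 0" by simp
    then show ?thesis unfolding \<phi>_def by auto
  next
    assume "\<phi> = 1\<^sub>m r"
    then have "\<forall>i<r. \<forall>j<r. \<phi> $$ (i, j) = (if i = j then 1 else 0)" by simp
    then show ?thesis unfolding \<phi>_def by auto
  qed
  have EE: "(\<Sum>b'<9. \<Sum>l<r. sb E r b b' i l * sb E r b' c l j) = sb E r b c i j"
    if "b < 9" "c < 9" "i < r" "j < r" for b c i j
    using mult_blocks[OF E E that, symmetric] idem by (simp add: sb_def)
  show "E = 0\<^sub>m (9 * r) (9 * r) \<or> E = 1\<^sub>m (9 * r)"
    using phv
  proof
    assume z: "\<forall>i<r. \<forall>j<r. sb E r 0 0 i j = 0"
    have all0: "sb E r b c i j = 0" if bc: "b < 9" "c < 9" "i < r" "j < r" for b c i j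
    proof (cases "b = c")
      case True then show ?thesis using bf_diag[OF bf bc(1,3,4)] z bc by simp
    next
      case bnc: False
      show ?thesis
      proof (cases "free b c")
        case False then show ?thesis using bf_zero[OF bf bc(1,2) bnc False bc(3,4)] by simp
      next
        case fr: True
        have "(\<Sum>b'<9. \<Sum>l<r. sb E r b b' i l * sb E r b' c l j) = 0"
        proof (rule sum.neutral, intro ballI)
          fix b' assume b': "b' \<in> {..<9::nat}"
          show "(\<Sum>l<r. sb E r b b' i l * sb E r b' c l j) = 0"
          proof (rule sum.neutral, intro ballI)
            fix l assume l: "l \<in> {..<r}"
            show "sb E r b b' i l * sb E r b' c l j = 0"
            proof (cases "b' = c")
              case True then show ?thesis using bf_diag[OF bf, of c l j] z l bc by simp
            next
              case b'c: False
              show ?thesis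
              proof (cases "b' = b")
                case True then show ?thesis using bf_diag[OF bf, of b i l] z l bc by simp
              next
                case b'b: False
                show ?thesis
                proof (cases "free b b'")
                  case False then show ?thesis using bf_zero[OF bf, of b b' i l] b'b b' bc l by auto
                next
                  case True
                  then have "\<not> free b' c" using free_chain by blast
                  then show ?thesis using bf_zero[OF bf, of b' c l j] b'c b' bc l by auto
                qed
              qed
            qed
          qed
        qed
        then show ?thesis using EE[OF bc] by simp
      qed
    qed
    show ?thesis
    proof (rule disjI1, rule eq_matI, goal_cases)
      case (1 i j)
      then have ij: "i < 9 * r" "j < 9 * r" by auto
      note eb = entry_blk(1)[OF ij, of E] entry_blk(2-5)[OF ij]
      show ?case
        using eb all0[OF eb(2-5)] ij by simp
    qed (use E in auto)
  next
    assume o: "\<forall>i<r. \<forall>j<r. sb E r 0 0 i j = (if i = j then 1 else 0)"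
    have all1: "sb E r b c i j = (if b = c \<and> i = j then 1 else 0)" if bc: "b < 9" "c < 9" "i < r" "j < r" for b c i j
    proof (cases "b = c")
      case True then show ?thesis using bf_diag[OF bf bc(1,3,4)] o bc by simp
    next
      case bnc: False
      show ?thesis
      proof (cases "free b c")
        case False then show ?thesis using bf_zero[OF bf bc(1,2) bnc False bc(3,4)] bnc by simp
      next
        case fr: True
        have "(\<Sum>b'<9. \<Sum>l<r. sb E r b b' i l * sb E r b' c l j)
            = (\<Sum>l<r. sb E r b b i l * sb E r b c l j) + (\<Sum>l<r. sb E r b c i l * sb E r c c l j)"
        proof (rule sum_two[OF bnc])
          fix b' assume b': "b' \<in> {..<9::nat}" "b' \<noteq> b" "b' \<noteq> c"
          show "(\<Sum>l<r. sb E r b b' i l * sb E r b' c l j) = 0"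
          proof (rule sum.neutral, intro ballI)
            fix l assume l: "l \<in> {..<r}"
            show "sb E r b b' i l * sb E r b' c l j = 0"
            proof (cases "free b b'")
              case False then show ?thesis using bf_zero[OF bf, of b b' i l] b' bc l by auto
            next
              case True
              then have "\<not> free b' c" using free_chain by blast
              then show ?thesis using bf_zero[OF bf, of b' c l j] b' bc l by auto
            qed
          qed
        qed (use bc in auto)
        also have "(\<Sum>l<r. sb E r b b i l * sb E r b c l j) = (\<Sum>l<r. if l = i then sb E r b c l j else 0)"
          by (rule sum.cong[OF refl]) (use bf_diag[OF bf bc(1)] o bc in auto)
        also have "\<dots> = sb E r b c i j" using bc by simp
        also have "(\<Sum>l<r. sb E r b c i l * sb E r c c l j) = (\<Sum>l<r. if l = j then sb E r b c i l else 0)"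
          by (rule sum.cong[OF refl]) (use bf_diag[OF bf bc(2)] o bc in auto)
        also have "\<dots> = sb E r b c i j" using bc by simp
        finally have "sb E r b c i j + sb E r b c i j = sb E r b c i j" using EE[OF bc] by simp
        then show ?thesis using bnc by (metis add_cancel_right_right)
      qed
    qed
    show ?thesis
    proof (rule disjI2, rule eq_matI, goal_cases)
      case (1 i j)
      then have ij: "i < 9 * r" "j < 9 * r" by auto
      note eb = entry_blk(1)[OF ij, of E] entry_blk(2-5)[OF ij]
      have "(i = j) = (i div r = j div r \<and> i mod r = j mod r)"
        by (metis div_mult_mod_eq)
      then show ?case
        using eb all1[OF eb(2-5)] ij by simp
    qed (use E in auto)
  qed
qed

lemma iso:
  assumes X1: "X1 \<in> carrier_mat r r" and Y1: "Y1 \<in> carrier_mat r r"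
    and X2': "X2 \<in> carrier_mat r' r'" and Y2': "Y2 \<in> carrier_mat r' r'"
    and ri: "rep_iso n XX (9 * r) (TT r X1 Y1) (9 * r') (TT r' X2 Y2)"
  shows "kxy_iso r X1 Y1 r' X2 Y2"
proof -
  have ri': "9 * r = 9 * r' \<and> (\<exists>S \<in> carrier_mat (9 * r) (9 * r). invertible_mat S \<and>
      (\<forall>f \<in> (corner n XX :: (path \<Rightarrow> 'a) set). S * TT r X1 Y1 f = TT r' X2 Y2 f * S))"
    using ri unfolding rep_iso_def .
  then have rr: "r' = r" by simp
  from ri' obtain S where S: "S \<in> carrier_mat (9 * r) (9 * r)" and inv: "invertible_mat S"
    and comm': "\<forall>f\<in>corner n XX. S * TT r X1 Y1 f = TT r' X2 Y2 f * S"
    by blast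
  have comm: "\<forall>f\<in>corner n XX. S * TT r X1 Y1 f = TT r X2 Y2 f * S"
    using comm' unfolding rr .
  have X2: "X2 \<in> carrier_mat r r" and Y2: "Y2 \<in> carrier_mat r r" using X2' Y2' unfolding rr .
  from inv obtain B where i1: "inverts_mat S B" and i2: "inverts_mat B S"
    unfolding invertible_mat_def by blast
  have SB: "S * B = 1\<^sub>m (9 * r)" using i1 S unfolding inverts_mat_def by simp
  have BS: "B * S = 1\<^sub>m (dim_row B)" using i2 unfolding inverts_mat_def .
  have "dim_col B = dim_col (S * B)" by simp
  also have "\<dots> = 9 * r" using SB by simp
  finally have dcB: "dim_col B = 9 * r" .
  have "dim_col (B * S) = dim_row B" by (subst BS) simp
  moreover have "dim_col (B * S) = 9 * r" using S by simp
  ultimately have drB: "dim_row B = 9 * r" by simp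
  have B: "B \<in> carrier_mat (9 * r) (9 * r)" using dcB drB by auto
  have BS': "B * S = 1\<^sub>m (9 * r)" using BS drB by simp
  have commB: "\<forall>f\<in>corner n XX. B * TT r X2 Y2 f = TT r X1 Y1 f * B"
  proof
    fix f :: "path \<Rightarrow> 'a" assume f: "f \<in> corner n XX"
    have T1: "TT r X1 Y1 f \<in> carrier_mat (9 * r) (9 * r)" by (rule TT_carrier)
    have T2: "TT r X2 Y2 f \<in> carrier_mat (9 * r) (9 * r)" by (rule TT_carrier)
    have BT2: "B * TT r X2 Y2 f \<in> carrier_mat (9 * r) (9 * r)" using B T2 by simp
    have "B * TT r X2 Y2 f = B * TT r X2 Y2 f * (S * B)"
      using SB right_mult_one_mat[OF BT2] by simp
    also have "\<dots> = B * TT r X2 Y2 f * S * B"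
      using assoc_mult_mat[OF BT2 S B] by simp
    also have "B * TT r X2 Y2 f * S = B * (TT r X2 Y2 f * S)"
      using assoc_mult_mat[OF B T2 S] .
    also have "\<dots> = B * (S * TT r X1 Y1 f)" using comm f by simp
    also have "\<dots> = B * S * TT r X1 Y1 f"
      using assoc_mult_mat[OF B S T1] by simp
    also have "\<dots> = TT r X1 Y1 f" using BS' T1 by simp
    finally show "B * TT r X2 Y2 f = TT r X1 Y1 f * B" .
  qed
  note bsS = blockstruct[OF S X1 Y1 X2 Y2 comm]
  note bsB = blockstruct[OF B X2 Y2 X1 Y1 commB]
  define \<phi> where "\<phi> = mat r r (\<lambda>(i, j). sb S r 0 0 i j)"
  define \<psi> where "\<psi> = mat r r (\<lambda>(i, j). sb B r 0 0 i j)"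
  have pc: "\<phi> \<in> carrier_mat r r" by (simp add: \<phi>_def)
  have pX: "\<phi> * X1 = X2 * \<phi>" unfolding \<phi>_def by (rule phi_mat[OF X1 X2 bsS(2)])
  have pY: "\<phi> * Y1 = Y2 * \<phi>" unfolding \<phi>_def by (rule phi_mat[OF Y1 Y2 bsS(3)])
  have pp1: "\<phi> * \<psi> = 1\<^sub>m r"
    unfolding \<phi>_def \<psi>_def phi_prod[OF S B bsS(1)] SB
    by (rule eq_matI) auto
  have pp2: "\<psi> * \<phi> = 1\<^sub>m r"
    unfolding \<phi>_def \<psi>_def phi_prod[OF B S bsB(1)] using BS B
    by (intro eq_matI) auto
  have dr: "dim_row \<phi> = r" "dim_row \<psi> = r" by (simp_all add: \<phi>_def \<psi>_def)
  have "inverts_mat \<phi> \<psi>" using pp1 dr unfolding inverts_mat_def by simp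
  moreover have "inverts_mat \<psi> \<phi>" using pp2 dr unfolding inverts_mat_def by simp
  moreover have "square_mat \<phi>" unfolding \<phi>_def by simp
  ultimately have "invertible_mat \<phi>"
    unfolding invertible_mat_def by blast
  then show ?thesis unfolding kxy_iso_def using rr pc pX pY by blast
qed

end

theorem lemma2:
  fixes m n :: nat
  assumes "alg_closed TYPE('k::field)"
    and "4 < m" and "m \<le> n"
  shows "wild_corner TYPE('k) n {3, m}"
proof -
  interpret cfg m n using assms(2,3) by unfold_locales
  have b: "is_bimod n {3, m} 9 (Phi m :: (path \<Rightarrow> 'k) \<Rightarrow> nat \<Rightarrow> nat \<Rightarrow> 'k ncpoly)" by (rule bimod)
  have i: "\<forall>r (X1 :: 'k mat) Y1. X1 \<in> carrier_mat r r \<longrightarrow> Y1 \<in> carrier_mat r r \<longrightarrow> kxy_indec r X1 Y1 \<longrightarrow>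
            rep_indec n {3, m} (9 * r) (tensor_rep 9 (Phi m) r X1 Y1)"
    using indec unfolding TT_def by blast
  have s: "\<forall>r (X1 :: 'k mat) Y1 r' X2 Y2. X1 \<in> carrier_mat r r \<longrightarrow> Y1 \<in> carrier_mat r r \<longrightarrow>
            X2 \<in> carrier_mat r' r' \<longrightarrow> Y2 \<in> carrier_mat r' r' \<longrightarrow>
            rep_iso n {3, m} (9 * r) (tensor_rep 9 (Phi m) r X1 Y1) (9 * r') (tensor_rep 9 (Phi m) r' X2 Y2) \<longrightarrow>
            kxy_iso r X1 Y1 r' X2 Y2"
    using iso unfolding TT_def by blast
  show ?thesis unfolding wild_corner_def using b i s by blast
qed

end
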